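(* Let $\mathcal A=(S,R_0)$ be an argumentation network with joint attacks, where $S\neq\varnothing$ and $R_0\subseteq(2^S\setminus\{\varnothing\})\times S$, such that every $x\in S$ is attacked by finitely many sets $G$ (with $GR_0x$) and every such $G$ is finite. Regard the elements of $S$ as atoms of $\mathbf{CN}$ and let $\Delta_{\mathcal A}$ consist of the following formulas for every $x\in S$: $$(\textstyle\bigvee_{GR_0x}\bigwedge_{z\in G}z)\to Nx,\qquad x\leftrightarrow \bigwedge_{GR_0x}\bigvee_{z\in G}Nz,$$ $$\textstyle\bigwedge_{GR_0x}(\bigvee_{z\in G}\neg z)\wedge\bigl(\bigvee_{GR_0x}\bigwedge_{z\in G}(z\vee\neg Nz)\bigr)\to\neg x\wedge\neg Nx$$ (empty conjunction $\top$, empty disjunction $\bot$). Then the $\mathbf{CN}$-models of $\Delta_{\mathcal A}$ correspond exactly to the legitimate Caminada–Gabbay labellings of $\mathcal A$: for every $\mathbf{CN}$-model $h$ of $\Delta_{\mathcal A}$, the map $\lambda_h$ with $\lambda_h(x)=\mathrm{in}$ if $h(x)=1$, $\mathrm{out}$ if $h(Nx)=1$, $\mathrm{und}$ if $h(x)=h(Nx)=0$ is a legitimate Caminada–Gabbay labelling; and for every legitimate Caminada–Gabbay labelling $\lambda$, the assignment $h_\lambda$ with $h_\lambda(x)=1$ iff $\lambda(x)=\mathrm{in}$ and $h_\lambda(Nx)=1$ iff $\lambda(x)=\mathrm{out}$ is a $\mathbf{CN}$-model of $\Delta_{\mathcal A}$.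
   Context: The logic $\mathbf{CN}$: atomic formulas are $q$ and $Nq$ for basic atoms $q$; formulas use classical connectives; a $\mathbf{CN}$-model is a classical $\{0,1\}$-assignment $h$ to all atoms $q,Nq$ with $h(Nq)=1\Rightarrow h(q)=0$, with classical satisfaction. A legitimate Caminada–Gabbay labelling of $(S,R_0)$ is $\lambda:S\to\{\mathrm{in},\mathrm{out},\mathrm{und}\}$ such that for each $x$: (CG1) $\lambda(x)=\mathrm{in}$ iff either $x$ is attacked by no $G$, or for every $G$ with $GR_0x$ there is $y\in G$ with $\lambda(y)=\mathrm{out}$; (CG2) $\lambda(x)=\mathrm{out}$ iff for some $G$ with $GR_0x$, all $y\in G$ have $\lambda(y)=\mathrm{in}$; (CG3) $\lambda(x)=\mathrm{und}$ iff for every $G$ with $GR_0x$ there is $y\in G$ with $\lambda(y)\neq\mathrm{in}$, and for some $G'$ with $G'R_0x$ every $y\in G'$ has $\lambda(y)\in\{\mathrm{in},\mathrm{und}\}$. *)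

theory Defs
  imports Main
begin

datatype 'a cn_atom = Pos 'a | Nq 'a

datatype 'a cn_form =
    Atom "'a cn_atom"
  | Top
  | Bot
  | Not "'a cn_form"
  | And "'a cn_form" "'a cn_form"
  | Or "'a cn_form" "'a cn_form"
  | Imp "'a cn_form" "'a cn_form"
  | Iff "'a cn_form" "'a cn_form"

fun sat :: "('a cn_atom \<Rightarrow> bool) \<Rightarrow> 'a cn_form \<Rightarrow> bool" where
  "sat h (Atom a) = h a"
| "sat h Top = True"
| "sat h Bot = False"
| "sat h (Not p) = (\<not> sat h p)"
| "sat h (And p q) = (sat h p \<and> sat h q)"
| "sat h (Or p q) = (sat h p \<or> sat h q)"
| "sat h (Imp p q) = (sat h p \<longrightarrow> sat h q)"
| "sat h (Iff p q) = (sat h p \<longleftrightarrow> sat h q)"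

definition Conjs :: "'a cn_form list \<Rightarrow> 'a cn_form" where
  "Conjs ps = foldr And ps Top"

definition Disjs :: "'a cn_form list \<Rightarrow> 'a cn_form" where
  "Disjs ps = foldr Or ps Bot"

definition list_of :: "'b set \<Rightarrow> 'b list" where
  "list_of A = (SOME xs. set xs = A \<and> distinct xs)"

definition BigAnd :: "'b set \<Rightarrow> ('b \<Rightarrow> 'a cn_form) \<Rightarrow> 'a cn_form" where
  "BigAnd A f = Conjs (map f (list_of A))"

definition BigOr :: "'b set \<Rightarrow> ('b \<Rightarrow> 'a cn_form) \<Rightarrow> 'a cn_form" where
  "BigOr A f = Disjs (map f (list_of A))"

definition cn_model :: "('a cn_atom \<Rightarrow> bool) \<Rightarrow> bool" where
  "cn_model h \<longleftrightarrow> (\<forall>q. h (Nq q) \<longrightarrow> \<not> h (Pos q))"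

definition cn_model_of :: "('a cn_atom \<Rightarrow> bool) \<Rightarrow> 'a cn_form set \<Rightarrow> bool" where
  "cn_model_of h \<Delta> \<longleftrightarrow> cn_model h \<and> (\<forall>\<phi>\<in>\<Delta>. sat h \<phi>)"

definition joint_af :: "'a set \<Rightarrow> ('a set \<times> 'a) set \<Rightarrow> bool" where
  "joint_af S R0 \<longleftrightarrow> S \<noteq> {} \<and> R0 \<subseteq> (Pow S - {{}}) \<times> S"

definition attackers :: "('a set \<times> 'a) set \<Rightarrow> 'a \<Rightarrow> 'a set set" where
  "attackers R0 x = {G. (G, x) \<in> R0}"

definition Delta :: "'a set \<Rightarrow> ('a set \<times> 'a) set \<Rightarrow> 'a cn_form set" where
  "Delta S R0 = (\<Union>x\<in>S.
     { Imp (BigOr (attackers R0 x) (\<lambda>G. BigAnd G (\<lambda>z. Atom (Pos z)))) (Atom (Nq x)),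
       Iff (Atom (Pos x)) (BigAnd (attackers R0 x) (\<lambda>G. BigOr G (\<lambda>z. Atom (Nq z)))),
       Imp (And (BigAnd (attackers R0 x) (\<lambda>G. BigOr G (\<lambda>z. Not (Atom (Pos z)))))
                (BigOr (attackers R0 x) (\<lambda>G. BigAnd G (\<lambda>z. Or (Atom (Pos z)) (Not (Atom (Nq z)))))))
           (And (Not (Atom (Pos x))) (Not (Atom (Nq x)))) })"

datatype label = In | Out | Und

definition legit_CG :: "'a set \<Rightarrow> ('a set \<times> 'a) set \<Rightarrow> ('a \<Rightarrow> label) \<Rightarrow> bool" where
  "legit_CG S R0 lab \<longleftrightarrow> (\<forall>x\<in>S.
     (lab x = In \<longleftrightarrow> (attackers R0 x = {} \<or> (\<forall>G\<in>attackers R0 x. \<exists>y\<in>G. lab y = Out))) \<and>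
     (lab x = Out \<longleftrightarrow> (\<exists>G\<in>attackers R0 x. \<forall>y\<in>G. lab y = In)) \<and>
     (lab x = Und \<longleftrightarrow> ((\<forall>G\<in>attackers R0 x. \<exists>y\<in>G. lab y \<noteq> In) \<and>
                         (\<exists>G'\<in>attackers R0 x. \<forall>y\<in>G'. lab y \<in> {In, Und}))))"

definition lab_of_model :: "('a cn_atom \<Rightarrow> bool) \<Rightarrow> 'a \<Rightarrow> label" where
  "lab_of_model h x = (if h (Pos x) then In else if h (Nq x) then Out else Und)"

definition model_of_lab :: "('a \<Rightarrow> label) \<Rightarrow> 'a cn_atom \<Rightarrow> bool" where
  "model_of_lab lab a = (case a of Pos x \<Rightarrow> lab x = In | Nq x \<Rightarrow> lab x = Out)"

end

theory Submission
  imports Defs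
begin

lemma list_of_set: "finite A \<Longrightarrow> set (list_of A) = A"
  unfolding list_of_def
  by (metis (mono_tags, lifting) finite_distinct_list someI_ex)

lemma sat_Conjs: "sat h (Conjs ps) = (\<forall>p\<in>set ps. sat h p)"
  unfolding Conjs_def by (induction ps) auto

lemma sat_Disjs: "sat h (Disjs ps) = (\<exists>p\<in>set ps. sat h p)"
  unfolding Disjs_def by (induction ps) auto

lemma sat_BigAnd: "finite A \<Longrightarrow> sat h (BigAnd A f) = (\<forall>a\<in>A. sat h (f a))"
  unfolding BigAnd_def by (simp add: sat_Conjs list_of_set)

lemma sat_BigOr: "finite A \<Longrightarrow> sat h (BigOr A f) = (\<exists>a\<in>A. sat h (f a))"
  unfolding BigOr_def by (simp add: sat_Disjs list_of_set)

lemma sat_AO: "finite A \<Longrightarrow> (\<And>G. G \<in> A \<Longrightarrow> finite G) \<Longrightarrow>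
  sat h (BigAnd A (\<lambda>G. BigOr G f)) = (\<forall>G\<in>A. \<exists>z\<in>G. sat h (f z))"
  by (simp add: sat_BigAnd sat_BigOr)

lemma sat_OA: "finite A \<Longrightarrow> (\<And>G. G \<in> A \<Longrightarrow> finite G) \<Longrightarrow>
  sat h (BigOr A (\<lambda>G. BigAnd G f)) = (\<exists>G\<in>A. \<forall>z\<in>G. sat h (f z))"
  by (simp add: sat_BigAnd sat_BigOr)

theorem theorem20:
  fixes S :: "'a set" and R0 :: "('a set \<times> 'a) set"
  assumes "joint_af S R0"
    and "\<forall>x\<in>S. finite (attackers R0 x)"
    and "\<forall>(G, x)\<in>R0. finite G"
  shows "(\<forall>h. cn_model_of h (Delta S R0) \<longrightarrow> legit_CG S R0 (lab_of_model h))
       \<and> (\<forall>lab. legit_CG S R0 lab \<longrightarrow> cn_model_of (model_of_lab lab) (Delta S R0))"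
proof -
  have fG: "\<And>G x. G \<in> attackers R0 x \<Longrightarrow> finite G"
    using assms(3) unfolding attackers_def by auto
  have satD: "\<And>h x. x \<in> S \<Longrightarrow> (\<forall>\<phi>\<in>Delta S R0. sat h \<phi>) \<Longrightarrow>
     ((\<exists>G\<in>attackers R0 x. \<forall>z\<in>G. h (Pos z)) \<longrightarrow> h (Nq x)) \<and>
     (h (Pos x) = (\<forall>G\<in>attackers R0 x. \<exists>z\<in>G. h (Nq z))) \<and>
     ((\<forall>G\<in>attackers R0 x. \<exists>z\<in>G. \<not> h (Pos z)) \<and> (\<exists>G\<in>attackers R0 x. \<forall>z\<in>G. h (Pos z) \<or> \<not> h (Nq z))
        \<longrightarrow> \<not> h (Pos x) \<and> \<not> h (Nq x))"
  proof -
    fix h x assume x: "x \<in> S" and all: "\<forall>\<phi>\<in>Delta S R0. sat h \<phi>"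
    have fA: "finite (attackers R0 x)" using assms(2) x by auto
    have "\<And>\<phi>. \<phi> \<in> {Imp (BigOr (attackers R0 x) (\<lambda>G. BigAnd G (\<lambda>z. Atom (Pos z)))) (Atom (Nq x)),
       Iff (Atom (Pos x)) (BigAnd (attackers R0 x) (\<lambda>G. BigOr G (\<lambda>z. Atom (Nq z)))),
       Imp (And (BigAnd (attackers R0 x) (\<lambda>G. BigOr G (\<lambda>z. Not (Atom (Pos z)))))
                (BigOr (attackers R0 x) (\<lambda>G. BigAnd G (\<lambda>z. Or (Atom (Pos z)) (Not (Atom (Nq z)))))))
           (And (Not (Atom (Pos x))) (Not (Atom (Nq x)))) } \<Longrightarrow> sat h \<phi>"
      using all x unfolding Delta_def by blast
    then have s1: "sat h (Imp (BigOr (attackers R0 x) (\<lambda>G. BigAnd G (\<lambda>z. Atom (Pos z)))) (Atom (Nq x)))"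
      and s2: "sat h (Iff (Atom (Pos x)) (BigAnd (attackers R0 x) (\<lambda>G. BigOr G (\<lambda>z. Atom (Nq z)))))"
      and s3: "sat h (Imp (And (BigAnd (attackers R0 x) (\<lambda>G. BigOr G (\<lambda>z. Not (Atom (Pos z)))))
                (BigOr (attackers R0 x) (\<lambda>G. BigAnd G (\<lambda>z. Or (Atom (Pos z)) (Not (Atom (Nq z)))))))
           (And (Not (Atom (Pos x))) (Not (Atom (Nq x)))))" by blast+
    then show "?thesis h x"
      by (simp add: sat_AO[OF fA fG] sat_OA[OF fA fG])
  qed
  have P1: "\<forall>h. cn_model_of h (Delta S R0) \<longrightarrow> legit_CG S R0 (lab_of_model h)"
  proof (intro allI impI)
    fix h assume m: "cn_model_of h (Delta S R0)"
    have cn: "\<And>q. h (Nq q) \<Longrightarrow> \<not> h (Pos q)" using m unfolding cn_model_of_def cn_model_def by auto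
    have outiff: "\<And>z. (lab_of_model h z = Out) = h (Nq z)" using cn unfolding lab_of_model_def by auto
    have iniff: "\<And>z. (lab_of_model h z = In) = h (Pos z)" unfolding lab_of_model_def by auto
    show "legit_CG S R0 (lab_of_model h)"
      unfolding legit_CG_def
    proof
      fix x assume x: "x \<in> S"
      have mm: "\<forall>\<phi>\<in>Delta S R0. sat h \<phi>" using m unfolding cn_model_of_def by blast
      note D0 = satD[OF x mm]
      note D = conjunct1[OF D0] conjunct1[OF conjunct2[OF D0]] conjunct2[OF conjunct2[OF D0]]
      have I: "(lab_of_model h x = In) = (\<forall>G\<in>attackers R0 x. \<exists>y\<in>G. lab_of_model h y = Out)"
        using D by (simp add: outiff iniff)
      have O: "(lab_of_model h x = Out) = (\<exists>G\<in>attackers R0 x. \<forall>y\<in>G. lab_of_model h y = In)"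
      proof
        assume "lab_of_model h x = Out"
        then have hn: "h (Nq x)" using outiff by blast
        then have hp: "\<not> h (Pos x)" using cn by blast
        then obtain G where G: "G \<in> attackers R0 x" "\<forall>z\<in>G. \<not> h (Nq z)" using D(2) hp by blast
        then have "\<exists>G\<in>attackers R0 x. \<forall>z\<in>G. h (Pos z) \<or> \<not> h (Nq z)" by blast
        then have "\<not> (\<forall>G\<in>attackers R0 x. \<exists>z\<in>G. \<not> h (Pos z))" using D(3) hn by blast
        then show "\<exists>G\<in>attackers R0 x. \<forall>y\<in>G. lab_of_model h y = In" using iniff by blast
      next
        assume "\<exists>G\<in>attackers R0 x. \<forall>y\<in>G. lab_of_model h y = In"
        then have "h (Nq x)" using D(1) iniff by blast
        then show "lab_of_model h x = Out" using outiff by blast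
      qed
      have U: "(lab_of_model h x = Und) = (lab_of_model h x \<noteq> In \<and> lab_of_model h x \<noteq> Out)"
        by (cases "lab_of_model h x") auto
      have lz: "\<And>y. (lab_of_model h y \<in> {In, Und}) = (lab_of_model h y \<noteq> Out)"
        by (case_tac "lab_of_model h y") auto
      show "(lab_of_model h x = In \<longleftrightarrow> (attackers R0 x = {} \<or> (\<forall>G\<in>attackers R0 x. \<exists>y\<in>G. lab_of_model h y = Out))) \<and>
     (lab_of_model h x = Out \<longleftrightarrow> (\<exists>G\<in>attackers R0 x. \<forall>y\<in>G. lab_of_model h y = In)) \<and>
     (lab_of_model h x = Und \<longleftrightarrow> ((\<forall>G\<in>attackers R0 x. \<exists>y\<in>G. lab_of_model h y \<noteq> In) \<and>
                         (\<exists>G'\<in>attackers R0 x. \<forall>y\<in>G'. lab_of_model h y \<in> {In, Und})))"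
      proof (intro conjI)
        show "(lab_of_model h x = In) = (attackers R0 x = {} \<or> (\<forall>G\<in>attackers R0 x. \<exists>y\<in>G. lab_of_model h y = Out))"
          using I by auto
        show "(lab_of_model h x = Out) = (\<exists>G\<in>attackers R0 x. \<forall>y\<in>G. lab_of_model h y = In)" by (rule O)
        have "(\<exists>G'\<in>attackers R0 x. \<forall>y\<in>G'. lab_of_model h y \<in> {In, Und}) = (\<not> (\<forall>G\<in>attackers R0 x. \<exists>y\<in>G. lab_of_model h y = Out))"
          using lz by auto
        moreover have "(\<forall>G\<in>attackers R0 x. \<exists>y\<in>G. lab_of_model h y \<noteq> In) = (\<not> (\<exists>G\<in>attackers R0 x. \<forall>y\<in>G. lab_of_model h y = In))"
          by auto
        ultimately have e1: "(\<exists>G'\<in>attackers R0 x. \<forall>y\<in>G'. lab_of_model h y \<in> {In, Und}) = (\<not> (\<forall>G\<in>attackers R0 x. \<exists>y\<in>G. lab_of_model h y = Out))"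
          and e2: "(\<forall>G\<in>attackers R0 x. \<exists>y\<in>G. lab_of_model h y \<noteq> In) = (\<not> (\<exists>G\<in>attackers R0 x. \<forall>y\<in>G. lab_of_model h y = In))" by blast+
        show "(lab_of_model h x = Und) = ((\<forall>G\<in>attackers R0 x. \<exists>y\<in>G. lab_of_model h y \<noteq> In) \<and> (\<exists>G'\<in>attackers R0 x. \<forall>y\<in>G'. lab_of_model h y \<in> {In, Und}))"
          unfolding e1 e2 U I[symmetric] O[symmetric] by blast
      qed
    qed
  qed
  have P2: "\<forall>lab. legit_CG S R0 lab \<longrightarrow> cn_model_of (model_of_lab lab) (Delta S R0)"
  proof (intro allI impI)
    fix lab assume L: "legit_CG S R0 lab"
    have cn: "cn_model (model_of_lab lab)" unfolding cn_model_def model_of_lab_def by auto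
    have "\<forall>\<phi>\<in>Delta S R0. sat (model_of_lab lab) \<phi>"
    proof
      fix \<phi> assume "\<phi> \<in> Delta S R0"
      then obtain x where x: "x \<in> S" and phi: "\<phi> \<in> {Imp (BigOr (attackers R0 x) (\<lambda>G. BigAnd G (\<lambda>z. Atom (Pos z)))) (Atom (Nq x)),
       Iff (Atom (Pos x)) (BigAnd (attackers R0 x) (\<lambda>G. BigOr G (\<lambda>z. Atom (Nq z)))),
       Imp (And (BigAnd (attackers R0 x) (\<lambda>G. BigOr G (\<lambda>z. Not (Atom (Pos z)))))
                (BigOr (attackers R0 x) (\<lambda>G. BigAnd G (\<lambda>z. Or (Atom (Pos z)) (Not (Atom (Nq z)))))))
           (And (Not (Atom (Pos x))) (Not (Atom (Nq x)))) }"
        unfolding Delta_def by blast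
      have fA: "finite (attackers R0 x)" using assms(2) x by auto
      have Lx: "(lab x = In \<longleftrightarrow> (attackers R0 x = {} \<or> (\<forall>G\<in>attackers R0 x. \<exists>y\<in>G. lab y = Out))) \<and>
     (lab x = Out \<longleftrightarrow> (\<exists>G\<in>attackers R0 x. \<forall>y\<in>G. lab y = In))"
        using L x unfolding legit_CG_def by blast
      have ne: "lab x = Out \<Longrightarrow> lab x \<noteq> In" by auto
      show "sat (model_of_lab lab) \<phi>"
      proof -
        have LI: "lab x = In \<longleftrightarrow> (\<forall>G\<in>attackers R0 x. \<exists>y\<in>G. lab y = Out)" using Lx by blast
        have LO: "lab x = Out \<longleftrightarrow> (\<exists>G\<in>attackers R0 x. \<forall>y\<in>G. lab y = In)" using Lx by blast
        have "\<phi> = Imp (BigOr (attackers R0 x) (\<lambda>G. BigAnd G (\<lambda>z. Atom (Pos z)))) (Atom (Nq x)) \<or>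
          \<phi> = Iff (Atom (Pos x)) (BigAnd (attackers R0 x) (\<lambda>G. BigOr G (\<lambda>z. Atom (Nq z)))) \<or>
          \<phi> = Imp (And (BigAnd (attackers R0 x) (\<lambda>G. BigOr G (\<lambda>z. Not (Atom (Pos z)))))
                (BigOr (attackers R0 x) (\<lambda>G. BigAnd G (\<lambda>z. Or (Atom (Pos z)) (Not (Atom (Nq z)))))))
           (And (Not (Atom (Pos x))) (Not (Atom (Nq x))))" using phi by blast
        then show ?thesis
        proof (elim disjE)
          assume "\<phi> = Imp (BigOr (attackers R0 x) (\<lambda>G. BigAnd G (\<lambda>z. Atom (Pos z)))) (Atom (Nq x))"
          then show ?thesis by (simp add: sat_AO[OF fA fG] sat_OA[OF fA fG] model_of_lab_def LO)
        next
          assume "\<phi> = Iff (Atom (Pos x)) (BigAnd (attackers R0 x) (\<lambda>G. BigOr G (\<lambda>z. Atom (Nq z))))"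
          then show ?thesis by (simp add: sat_AO[OF fA fG] sat_OA[OF fA fG] model_of_lab_def LI)
        next
          assume "\<phi> = Imp (And (BigAnd (attackers R0 x) (\<lambda>G. BigOr G (\<lambda>z. Not (Atom (Pos z)))))
                (BigOr (attackers R0 x) (\<lambda>G. BigAnd G (\<lambda>z. Or (Atom (Pos z)) (Not (Atom (Nq z)))))))
           (And (Not (Atom (Pos x))) (Not (Atom (Nq x))))"
          moreover have "lab x \<noteq> In \<and> lab x \<noteq> Out"
            if "\<forall>G\<in>attackers R0 x. \<exists>z\<in>G. lab z \<noteq> In"
               "\<exists>G\<in>attackers R0 x. \<forall>z\<in>G. lab z = In \<or> lab z \<noteq> Out"
            using that LI LO by (metis label.distinct(2))
          ultimately show ?thesis by (simp add: sat_AO[OF fA fG] sat_OA[OF fA fG] model_of_lab_def)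
        qed
      qed
    qed
    then show "cn_model_of (model_of_lab lab) (Delta S R0)" using cn unfolding cn_model_of_def by auto
  qed
  show ?thesis using P1 P2 by blast
qed

end
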